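(* If the root system $\Phi$ is of type $C_n$, the closures of the regions of the hyperplane arrangement $\mathcal H_\Phi$ coincide with the cones on the facets of the root polytope $\mathcal P_\Phi$.
   Context: $\Phi$ is an irreducible root system of rank $n$ in the Euclidean space $E=\operatorname{span}_{\mathbb R}\Phi$; $\mathcal P_\Phi=\operatorname{conv}(\Phi)$. $\mathcal H_\Phi$ is the central hyperplane arrangement in $E$ consisting of the linear hyperplanes $\operatorname{span}_{\mathbb R}F$ for all faces $F$ of $\mathcal P_\Phi$ of codimension 2 (i.e. of dimension $n-2$). A region of $\mathcal H_\Phi$ is a connected component of $E\setminus\bigcup_{H\in\mathcal H_\Phi}H$. The cone on a facet $F$ is $\{tx\mid t\ge0,\ x\in F\}$. *)

theory Defs
  imports "HOL-Analysis.Analysis"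
begin

definition rootsC :: "(real ^ 'n) set" where
  "rootsC =
     {v. \<exists>i. v = 2 *\<^sub>R axis i 1 \<or> v = - (2 *\<^sub>R axis i 1)}
   \<union> {v. \<exists>i j. i \<noteq> j \<and> (\<exists>s t::real. (s = 1 \<or> s = -1) \<and> (t = 1 \<or> t = -1)
            \<and> v = s *\<^sub>R axis i 1 + t *\<^sub>R axis j 1)}"

definition root_polytope :: "('a::euclidean_space) set \<Rightarrow> 'a set" where
  "root_polytope \<Phi> = convex hull \<Phi>"

definition root_arrangement :: "('a::euclidean_space) set \<Rightarrow> 'a set set" where
  "root_arrangement \<Phi> =
     {span F | F. F face_of root_polytope \<Phi> \<and> aff_dim F = int (dim (span \<Phi>)) - 2}"

definition arrangement_regions :: "('a::euclidean_space) set \<Rightarrow> 'a set set \<Rightarrow> 'a set set" where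
  "arrangement_regions E H = components (E - \<Union>H)"

definition cone_on :: "('a::real_vector) set \<Rightarrow> 'a set" where
  "cone_on F = {t *\<^sub>R x | t x. t \<ge> 0 \<and> x \<in> F}"

end

theory Submission
  imports Defs
begin


lemma dim_le_aff_dim:
  fixes S :: "'a::euclidean_space set"
  assumes "a \<in> S"
  shows "int (dim S) \<le> aff_dim S + 1"
proof -
  let ?T = "(+) (- a) ` S"
  have ad: "aff_dim S = int (dim ?T)" using assms by (intro aff_dim_eq_dim) (simp add: hull_inc)
  have "S \<subseteq> span (insert a ?T)"
  proof
    fix x assume "x \<in> S"
    then have "x - a \<in> span (insert a ?T)" by (intro span_base) auto
    moreover have "a \<in> span (insert a ?T)" by (simp add: span_base)
    ultimately have "(x - a) + a \<in> span (insert a ?T)" by (rule span_add)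
    then show "x \<in> span (insert a ?T)" by simp
  qed
  then have "dim S \<le> dim (insert a ?T)" by (metis dim_span dim_subset)
  also have "\<dots> \<le> dim ?T + 1" by (simp add: dim_insert)
  finally show ?thesis using ad by simp
qed

lemma dim_eq_aff_dim:
  fixes S :: "'a::euclidean_space set"
  assumes "a \<in> S" and "0 \<notin> affine hull S"
  shows "int (dim S) = aff_dim S + 1"
proof -
  let ?T = "(+) (- a) ` S"
  have ad: "aff_dim S = int (dim ?T)" using assms by (intro aff_dim_eq_dim) (simp add: hull_inc)
  have sp: "span (insert a ?T) = span S"
  unfolding span_eq
  proof (intro conjI)
    show "insert a ?T \<subseteq> span S"
    proof
      fix y assume "y \<in> insert a ?T"
      then consider "y = a" | x where "x \<in> S" "y = x - a" by auto
      then show "y \<in> span S"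
      proof cases
        case 1 then show ?thesis using assms by (simp add: span_base)
      next
        case 2 then show ?thesis using assms by (simp add: span_base span_diff)
      qed
    qed
    show "S \<subseteq> span (insert a ?T)"
    proof
      fix x assume "x \<in> S"
      then have "x - a \<in> span (insert a ?T)" by (intro span_base) auto
      moreover have "a \<in> span (insert a ?T)" by (simp add: span_base)
      ultimately have "(x - a) + a \<in> span (insert a ?T)" by (rule span_add)
      then show "x \<in> span (insert a ?T)" by simp
    qed
  qed
  have "a \<notin> span ?T"
  proof
    assume "a \<in> span ?T"
    have "span ?T \<subseteq> span ((\<lambda>x. -a+x) ` (S-{a}))"
    proof (rule span_minimal)
      show "?T \<subseteq> span ((\<lambda>x. -a+x) ` (S-{a}))"
      proof
        fix y assume "y \<in> ?T"
        then obtain x where x: "x \<in> S" "y = -a + x" by auto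
        show "y \<in> span ((\<lambda>x. -a+x) ` (S-{a}))"
        proof (cases "x = a")
          case True then show ?thesis using x by (simp add: span_0)
        next
          case False then show ?thesis using x by (intro span_base) auto
        qed
      qed
    qed simp
    with \<open>a \<in> span ?T\<close> have "-a \<in> span ((\<lambda>x. -a+x) ` (S-{a}))" by (metis span_neg subsetD)
    then have "a + (-a) \<in> affine hull S" using affine_hull_span2[OF assms(1)] by blast
    then show False using assms by simp
  qed
  then have "dim (insert a ?T) = dim ?T + 1" by (simp add: dim_insert)
  moreover have "dim (insert a ?T) = dim S" by (metis sp dim_span)
  ultimately show ?thesis using ad by simp
qed



definition V :: "(real^'n) set" where
  "V = range (\<lambda>i. 2 *\<^sub>R axis i 1) \<union> range (\<lambda>i. - (2 *\<^sub>R axis i 1))"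

definition l1 :: "real^'n \<Rightarrow> real" where "l1 x = (\<Sum>i\<in>UNIV. \<bar>x$i\<bar>)"

lemma axis_comp: "axis i (c::real) $ j = (if j = i then c else 0)"
  by (simp add: axis_def)

lemma expand: "(x::real^'n) = (\<Sum>i\<in>UNIV. x$i *\<^sub>R axis i 1)"
  using basis_expansion[of x] by (simp add: scalar_mult_eq_scaleR)

lemma span_all_axes:
  fixes S :: "(real^'n) set"
  assumes "\<And>i. axis i 1 \<in> span S"
  shows "span S = UNIV"
proof -
  { fix x :: "real^'n"
    have "(\<Sum>i\<in>UNIV. x$i *\<^sub>R axis i 1) \<in> span S"
      by (intro span_sum span_mul assms)
    then have "x \<in> span S" using expand[of x] by simp }
  then show ?thesis by auto
qed

lemma dim_full: "span (S::(real^'n) set) = UNIV \<Longrightarrow> dim S = CARD('n)"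
  by (metis dim_span dim_UNIV DIM_cart DIM_real mult_1_right)

lemma dim_coord_hyp:
  fixes S :: "(real^'n) set"
  assumes "S \<subseteq> {x. x$k = 0}"
  shows "dim S \<le> CARD('n) - 1"
proof -
  have e: "{x::real^'n. x$k = 0} = {x. axis k 1 \<bullet> x = 0}"
    by (simp add: inner_axis')
  have "dim S \<le> dim {x::real^'n. x$k = 0}" using assms by (rule dim_subset)
  also have "\<dots> = CARD('n) - 1" unfolding e by (subst dim_hyperplane) auto
  finally show ?thesis .
qed

lemma dim_coord_hyp_eq: "dim {x::real^'n. x$k = 0} = CARD('n) - 1"
proof -
  have e: "{x::real^'n. x$k = 0} = {x. axis k 1 \<bullet> x = 0}"
    by (simp add: inner_axis')
  show ?thesis unfolding e by (subst dim_hyperplane) auto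
qed

lemma subspace_coord: "subspace {x::real^'n. x$k = 0}"
proof -
  have e: "{x::real^'n. x$k = 0} = {x. axis k 1 \<bullet> x = 0}"
    by (simp add: inner_axis')
  show ?thesis unfolding e by (rule subspace_hyperplane)
qed

lemma finite_V: "finite V" unfolding V_def by simp

lemma V_sub_roots: "V \<subseteq> rootsC"
  unfolding V_def rootsC_def by auto

lemma roots_sub_hullV: "rootsC \<subseteq> convex hull V"
proof
  fix v :: "real^'n" assume "v \<in> rootsC"
  then consider "v \<in> V" | i j s t where "i \<noteq> j" "s = 1 \<or> s = -1" "t = 1 \<or> t = -1"
      "v = s *\<^sub>R axis i 1 + t *\<^sub>R axis j 1"
  proof -
    note h = \<open>v \<in> rootsC\<close>[unfolded rootsC_def]
    show thesis
    proof (cases "\<exists>i. v = 2 *\<^sub>R axis i 1 \<or> v = - (2 *\<^sub>R axis i 1)")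
      case True then show ?thesis using that(1) unfolding V_def by auto
    next
      case False
      with h have "\<exists>i j s t. i \<noteq> j \<and> (s = 1 \<or> s = -1) \<and> (t = 1 \<or> t = -1) \<and> v = s *\<^sub>R axis i 1 + t *\<^sub>R axis j 1"
        by blast
      then show ?thesis using that(2) by blast
    qed
  qed
  then show "v \<in> convex hull V"
  proof cases
    case 1 then show ?thesis by (simp add: hull_inc)
  next
    case 2
    have a: "(2 * s) *\<^sub>R axis i 1 \<in> convex hull V" "(2 * t) *\<^sub>R axis j 1 \<in> convex hull V"
      using 2 by (auto intro!: hull_inc simp: V_def)
    have "(1/2) *\<^sub>R ((2 * s) *\<^sub>R axis i 1) + (1/2) *\<^sub>R ((2 * t) *\<^sub>R axis j 1) \<in> convex hull V"
      by (rule convexD[OF convex_convex_hull a]) auto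
    then show ?thesis using 2 by simp
  qed
qed

lemma P_eq: "convex hull rootsC = convex hull (V::(real^'n) set)"
  by (intro subset_antisym hull_minimal roots_sub_hullV convex_convex_hull hull_mono V_sub_roots)

lemma convex_l1: "convex {x::real^'n. l1 x \<le> 2}"
  unfolding convex_def l1_def
proof (intro ballI allI impI, clarsimp)
  fix x y :: "real^'n" and u v :: real
  assume h: "(\<Sum>i\<in>UNIV. \<bar>x$i\<bar>) \<le> 2" "(\<Sum>i\<in>UNIV. \<bar>y$i\<bar>) \<le> 2" "0 \<le> u" "0 \<le> v" "u + v = 1"
  have "(\<Sum>i\<in>UNIV. \<bar>u * x$i + v * y$i\<bar>) \<le> (\<Sum>i\<in>UNIV. u * \<bar>x$i\<bar> + v * \<bar>y$i\<bar>)"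
    by (intro sum_mono) (metis abs_mult abs_of_nonneg abs_triangle_ineq h(3) h(4))
  also have "\<dots> = u * (\<Sum>i\<in>UNIV. \<bar>x$i\<bar>) + v * (\<Sum>i\<in>UNIV. \<bar>y$i\<bar>)"
    by (simp add: sum.distrib sum_distrib_left)
  also have "\<dots> \<le> u * 2 + v * 2" using h by (intro add_mono mult_left_mono) auto
  finally show "(\<Sum>i\<in>UNIV. \<bar>u * x$i + v * y$i\<bar>) \<le> 2" using h by linarith
qed

lemma l1_roots: "v \<in> rootsC \<Longrightarrow> l1 (v::real^'n) \<le> 2"
proof -
  assume "v \<in> rootsC"
  then consider i where "v = 2 *\<^sub>R axis i 1 \<or> v = - (2 *\<^sub>R axis i 1)"
    | i j s t where "i \<noteq> j" "s = 1 \<or> s = -1" "t = 1 \<or> t = -1"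
      "v = s *\<^sub>R axis i 1 + t *\<^sub>R axis j 1"
    unfolding rootsC_def by blast
  then show ?thesis
  proof cases
    case 1
    then have "\<And>k. \<bar>v$k\<bar> = (if k = i then 2 else 0)" by (auto simp: axis_comp)
    then show ?thesis unfolding l1_def by (simp add: sum.delta')
  next
    case 2
    then have "\<And>k. \<bar>v$k\<bar> = (if k = i then 1 else 0) + (if k = j then 1 else 0)"
      by (auto simp: axis_comp)
    then show ?thesis unfolding l1_def using 2 by (simp add: sum.distrib sum.delta')
  qed
qed

lemma P_l1: "x \<in> convex hull rootsC \<Longrightarrow> l1 (x::real^'n) \<le> 2"
proof -
  assume "x \<in> convex hull rootsC"
  moreover have "convex hull rootsC \<subseteq> {x::real^'n. l1 x \<le> 2}"
    by (intro hull_minimal convex_l1) (auto simp: l1_roots)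
  ultimately show ?thesis by auto
qed

lemma key:
  fixes c x :: "real^'n"
  assumes "x \<in> convex hull rootsC" "\<And>i. \<bar>c$i\<bar> \<le> 1"
  shows "c \<bullet> x \<le> 2" and "c \<bullet> x = 2 \<Longrightarrow> c$i * x$i = \<bar>x$i\<bar>"
proof -
  have cx: "c \<bullet> x = (\<Sum>i\<in>UNIV. c$i * x$i)" by (simp add: inner_vec_def)
  have le: "c$i * x$i \<le> \<bar>x$i\<bar>" for i
  proof -
    have "c$i * x$i \<le> \<bar>c$i\<bar> * \<bar>x$i\<bar>" by (metis abs_ge_self abs_mult)
    also have "\<dots> \<le> \<bar>x$i\<bar>" using assms(2)[of i] by (simp add: mult_left_le_one_le)
    finally show ?thesis .
  qed
  have "c \<bullet> x \<le> l1 x" unfolding cx l1_def by (intro sum_mono le)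
  then show "c \<bullet> x \<le> 2" using P_l1[OF assms(1)] by linarith
  assume "c \<bullet> x = 2"
  then have "(\<Sum>i\<in>UNIV. \<bar>x$i\<bar> - c$i * x$i) \<le> 0"
    using P_l1[OF assms(1)] by (simp add: sum_subtractf cx[symmetric] l1_def)
  moreover have "\<forall>i\<in>UNIV. 0 \<le> \<bar>x$i\<bar> - c$i * x$i" using le by auto
  ultimately have "(\<Sum>i\<in>UNIV. \<bar>x$i\<bar> - c$i * x$i) = 0"
    by (meson order_antisym sum_nonneg)
  then have "\<forall>i\<in>UNIV. \<bar>x$i\<bar> - c$i * x$i = 0"
    using le by (subst (asm) sum_nonneg_eq_0_iff) auto
  then show "c$i * x$i = \<bar>x$i\<bar>" by auto
qed



definition Sig :: "(real^'n) set" where "Sig = {s. \<forall>i. s$i = 1 \<or> s$i = -1}"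
definition Orth :: "real^'n \<Rightarrow> (real^'n) set" where "Orth s = {x. \<forall>i. 0 \<le> s$i * x$i}"
definition Qo :: "real^'n \<Rightarrow> (real^'n) set" where "Qo s = {x. \<forall>i. 0 < s$i * x$i}"
definition Ws :: "real^'n \<Rightarrow> (real^'n) set" where "Ws s = range (\<lambda>i. (2 * s$i) *\<^sub>R axis i 1)"

lemma Qo_Inter: "Qo s = (\<Inter>i\<in>UNIV. {x. 0 < s$i * x$i})" unfolding Qo_def by auto
lemma Orth_Inter: "Orth s = (\<Inter>i\<in>UNIV. {x. 0 \<le> s$i * x$i})" unfolding Orth_def by auto

lemma open_Qo: "open (Qo s)"
  unfolding Qo_Inter by (intro open_INT) (auto intro!: open_Collect_less continuous_intros)

lemma closed_Orth: "closed (Orth s)"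
  unfolding Orth_Inter by (intro closed_INT) (auto intro!: closed_Collect_le continuous_intros)

lemma convex_Qo: "convex (Qo s)"
proof -
  have h: "\<And>i. {x. 0 < s$i * x$i} = {x. (s$i *\<^sub>R axis i 1) \<bullet> x > 0}"
    by (simp add: inner_axis')
  have "\<And>i. convex {x. 0 < s$i * x$i}" unfolding h by (rule convex_halfspace_gt)
  then show ?thesis unfolding Qo_Inter by (intro convex_INT) auto
qed

lemma Sig_sq: "s \<in> Sig \<Longrightarrow> s$i * s$i = 1"
proof -
  assume "s \<in> Sig"
  then have "s$i = 1 \<or> s$i = -1" unfolding Sig_def by blast
  then show ?thesis by auto
qed

lemma s_in_Qo: "s \<in> Sig \<Longrightarrow> s \<in> Qo s" unfolding Qo_def by (simp add: Sig_sq)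

lemma closure_Qo: assumes "s \<in> Sig" shows "closure (Qo s) = Orth s"
proof
  show "closure (Qo s) \<subseteq> Orth s"
    by (intro closure_minimal closed_Orth) (auto simp: Qo_def Orth_def less_imp_le)
  show "Orth s \<subseteq> closure (Qo s)"
  proof
    fix x assume x: "x \<in> Orth s"
    have ns: "norm s > 0" using s_in_Qo[OF assms] by (auto simp: Qo_def)
    show "x \<in> closure (Qo s)" unfolding closure_approachable
    proof (intro allI impI)
      fix e :: real assume e: "e > 0"
      define d where "d = e / (2 * norm s)"
      have d: "d > 0" using e ns by (simp add: d_def)
      have "x + d *\<^sub>R s \<in> Qo s"
        unfolding Qo_def mem_Collect_eq
      proof (rule allI)
        fix i
        have "s$i * (x + d *\<^sub>R s)$i = s$i * x$i + d * (s$i * s$i)" by (simp add: algebra_simps)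
        also have "\<dots> = s$i * x$i + d" using Sig_sq[OF assms] by simp
        finally show "0 < s$i * (x + d *\<^sub>R s)$i" using x d unfolding Orth_def
          by (smt (verit) mem_Collect_eq)
      qed
      moreover have "dist (x + d *\<^sub>R s) x = e / 2" using d ns e
        by (simp add: dist_norm d_def)
      ultimately show "\<exists>y\<in>Qo s. dist y x < e" using e by (intro bexI[of _ "x + d *\<^sub>R s"]) auto
    qed
  qed
qed

lemma Qo_disj:
  assumes s: "s \<in> Sig" and t: "t \<in> Sig" and ne: "Qo s \<noteq> Qo t"
  shows "Qo s \<inter> Qo t = {}"
proof -
    from ne have "s \<noteq> t" by auto
    then obtain i where i: "s$i \<noteq> t$i" by (metis vec_eq_iff)
    have "s$i = 1 \<or> s$i = -1" "t$i = 1 \<or> t$i = -1" using s t unfolding Sig_def by blast+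
    then have ti: "t$i = - s$i" using i by auto
    show "Qo s \<inter> Qo t = {}"
    proof (rule ccontr)
      assume "Qo s \<inter> Qo t \<noteq> {}"
      then obtain x where "x \<in> Qo s" "x \<in> Qo t" by blast
      then have "0 < s$i * x$i" "0 < t$i * x$i" unfolding Qo_def by blast+
      then show False using ti by simp
    qed
qed

lemma components_orth:
  "components (UNIV - {x::real^'n. \<exists>k. x$k = 0}) = Qo ` Sig"
proof (rule components_open_unique)
  show "pairwise disjnt (Qo ` Sig)"
    unfolding pairwise_def disjnt_def using Qo_disj by blast
  show "\<Union> (Qo ` Sig) = UNIV - {x::real^'n. \<exists>k. x$k = 0}"
  proof
    show "\<Union> (Qo ` Sig) \<subseteq> UNIV - {x::real^'n. \<exists>k. x$k = 0}"
    proof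
      fix x :: "real^'n" assume "x \<in> \<Union> (Qo ` Sig)"
      then obtain s where "x \<in> Qo s" by blast
      then have "\<And>k. 0 < s$k * x$k" unfolding Qo_def by blast
      then have "\<And>k. x$k \<noteq> 0" by (metis less_irrefl mult_zero_right)
      then show "x \<in> UNIV - {x::real^'n. \<exists>k. x$k = 0}" by blast
    qed
    show "UNIV - {x::real^'n. \<exists>k. x$k = 0} \<subseteq> \<Union> (Qo ` Sig)"
    proof
      fix x :: "real^'n" assume "x \<in> UNIV - {x::real^'n. \<exists>k. x$k = 0}"
      then have nz: "\<And>k. x$k \<noteq> 0" by auto
      define s :: "real^'n" where "s = (\<chi> i. if x$i > 0 then 1 else -1)"
      have "s \<in> Sig" unfolding Sig_def s_def by simp
      moreover have "x \<in> Qo s" unfolding Qo_def s_def mem_Collect_eq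
      proof
        fix i
        show "0 < (\<chi> i. if x$i > 0 then 1 else -1) $ i * x$i"
          using nz[of i] by (cases "x$i > 0") auto
      qed
      ultimately show "x \<in> \<Union> (Qo ` Sig)" by blast
    qed
  qed
  show "\<And>X. X \<in> Qo ` Sig \<Longrightarrow> open X \<and> connected X \<and> X \<noteq> {}"
    using open_Qo convex_connected convex_Qo s_in_Qo by blast
qed

lemma cone_sub_Orth:
  assumes "s \<in> Sig" "F \<subseteq> convex hull rootsC \<inter> {x. s \<bullet> x = 2}"
  shows "cone_on F \<subseteq> Orth s"
proof
  fix z assume "z \<in> cone_on F"
  then obtain t y where z: "z = t *\<^sub>R y" "t \<ge> 0" "y \<in> F" unfolding cone_on_def by blast
  have abs_s: "\<bar>s$i\<bar> \<le> 1" for i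
  proof -
    have "s$i = 1 \<or> s$i = -1" using assms(1) unfolding Sig_def by blast
    then show ?thesis by auto
  qed
  have yP: "y \<in> convex hull rootsC" "s \<bullet> y = 2" using z(3) assms(2) by blast+
  have eq: "s$i * y$i = \<bar>y$i\<bar>" for i by (rule key(2)[OF yP(1) abs_s yP(2)])
  show "z \<in> Orth s" unfolding Orth_def mem_Collect_eq
  proof
    fix i
    have "s$i * z$i = t * (s$i * y$i)" unfolding z by simp
    also have "\<dots> = t * \<bar>y$i\<bar>" by (simp add: eq)
    finally show "0 \<le> s$i * z$i" using z(2) by simp
  qed
qed

lemma Orth_sub_cone:
  assumes "s \<in> Sig"
  shows "Orth s \<subseteq> cone_on (convex hull Ws s)"
proof
  fix y assume y: "y \<in> Orth s"
  show "y \<in> cone_on (convex hull Ws s)"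
  proof (cases "y = 0")
    case True
    have "(2 * s$undefined) *\<^sub>R axis undefined 1 \<in> convex hull Ws s" by (intro hull_inc) (auto simp: Ws_def)
    then have "(0::real^'a) = (0::real) *\<^sub>R ((2 * s$undefined) *\<^sub>R axis undefined 1) \<and> (0::real) \<ge> 0 \<and> (2 * s$undefined) *\<^sub>R axis undefined 1 \<in> convex hull Ws s"
      by simp
    then show ?thesis unfolding cone_on_def True by blast
  next
    case False
    then obtain k where k: "y$k \<noteq> 0" by (metis vec_eq_iff zero_index)
    define L where "L = (\<Sum>i\<in>UNIV. s$i * y$i)"
    have nn: "\<And>i. 0 \<le> s$i * y$i" using y unfolding Orth_def by auto
    have "s$k = 1 \<or> s$k = -1" using assms unfolding Sig_def by blast
    then have "s$k * y$k \<noteq> 0" using k by auto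
    then have "0 < s$k * y$k" using nn[of k] by linarith
    moreover have "s$k * y$k \<le> L" unfolding L_def
      by (rule member_le_sum) (auto simp: nn)
    ultimately have L: "L > 0" by linarith
    have sum1: "(\<Sum>i\<in>UNIV. s$i * y$i / L) = 1" using L by (simp add: L_def sum_divide_distrib[symmetric])
    have z: "(\<Sum>i\<in>UNIV. (s$i * y$i / L) *\<^sub>R ((2 * s$i) *\<^sub>R axis i 1)) \<in> convex hull Ws s"
      by (intro convex_sum convex_convex_hull finite_UNIV sum1) (auto intro!: hull_inc divide_nonneg_pos nn L simp: Ws_def)
    have eq: "(\<Sum>i\<in>UNIV. (s$i * y$i / L) *\<^sub>R ((2 * s$i) *\<^sub>R axis i 1)) = (2 / L) *\<^sub>R y"
    proof -
      have "(\<Sum>i\<in>UNIV. (s$i * y$i / L) *\<^sub>R ((2 * s$i) *\<^sub>R axis i 1))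
          = (\<Sum>i\<in>UNIV. ((2 / L) * y$i) *\<^sub>R axis i 1)"
      proof (rule sum.cong[OF refl])
        fix i
        have "(s$i * y$i / L) * (2 * s$i) = (2 / L) * y$i * (s$i * s$i)" by (simp add: divide_simps mult_ac)
        then show "(s$i * y$i / L) *\<^sub>R ((2 * s$i) *\<^sub>R axis i 1) = ((2 / L) * y$i) *\<^sub>R axis i 1"
          using Sig_sq[OF assms] by simp
      qed
      also have "\<dots> = (2 / L) *\<^sub>R (\<Sum>i\<in>UNIV. y$i *\<^sub>R axis i 1)"
        by (simp add: scaleR_sum_right)
      also have "\<dots> = (2 / L) *\<^sub>R y" using expand[of y] by simp
      finally show ?thesis .
    qed
    have "y = (L / 2) *\<^sub>R ((2 / L) *\<^sub>R y)" using L by simp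
    then show ?thesis unfolding cone_on_def using z eq L
      by (intro CollectI exI[of _ "L/2"] exI[of _ "(2 / L) *\<^sub>R y"]) auto
  qed
qed



lemma V_elem: "w \<in> V \<Longrightarrow> \<exists>i c. (c = 2 \<or> c = -2) \<and> w = c *\<^sub>R (axis i 1 :: real^'n)"
proof -
  assume "w \<in> V"
  then obtain i where "w = 2 *\<^sub>R axis i 1 \<or> w = - (2 *\<^sub>R axis i 1)" unfolding V_def by blast
  then show ?thesis
  proof
    assume "w = 2 *\<^sub>R axis i 1" then show ?thesis by blast
  next
    assume "w = - (2 *\<^sub>R axis i 1)"
    then have "w = (-2) *\<^sub>R axis i 1 " by simp
    then show ?thesis by blast
  qed
qed

lemma axis_nz_idx: "(c *\<^sub>R axis i 1 :: real^'n) $ j \<noteq> 0 \<Longrightarrow> j = i"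
  by (auto simp: axis_comp split: if_splits)

lemma axis_from_scaled:
  assumes "c *\<^sub>R (axis i 1 :: real^'n) \<in> span S" "c \<noteq> 0"
  shows "axis i 1 \<in> span S"
proof -
  have "(1/c) *\<^sub>R (c *\<^sub>R (axis i 1 :: real^'n)) \<in> span S" by (rule span_mul[OF assms(1)])
  then show ?thesis using assms(2) by simp
qed

lemma V_sub_P: "V \<subseteq> convex hull (rootsC :: (real^'n) set)"
  by (rule order_trans[OF V_sub_roots hull_subset])

lemma pos_in_P: "2 *\<^sub>R axis i 1 \<in> convex hull (rootsC :: (real^'n) set)"
  and neg_in_P: "- (2 *\<^sub>R axis i 1) \<in> convex hull (rootsC :: (real^'n) set)"
  using V_sub_P unfolding V_def by auto

lemma zero_in_P: "0 \<in> convex hull (rootsC :: (real^'n) set)"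
proof -
  have "(1/2) *\<^sub>R (2 *\<^sub>R axis undefined 1) + (1/2) *\<^sub>R (- (2 *\<^sub>R axis undefined 1)) \<in> convex hull (rootsC :: (real^'n) set)"
    by (rule convexD[OF convex_convex_hull pos_in_P neg_in_P]) auto
  then show ?thesis by simp
qed

lemma span_P: "span (convex hull (rootsC :: (real^'n) set)) = UNIV"
  by (rule span_all_axes, rule axis_from_scaled[of 2]) (auto intro: span_base pos_in_P)

lemma span_roots: "span (rootsC :: (real^'n) set) = UNIV"
  by (rule span_all_axes, rule axis_from_scaled[of 2]) (auto intro: span_base simp: rootsC_def)

lemma aff_dim_P: "aff_dim (convex hull (rootsC :: (real^'n) set)) = int CARD('n)"
proof -
  have "aff_dim (convex hull (rootsC :: (real^'n) set)) = int (dim ((+) (- 0) ` (convex hull (rootsC :: (real^'n) set))))"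
    by (rule aff_dim_eq_dim) (simp add: subsetD[OF convex_hull_subset_affine_hull zero_in_P])
  also have "\<dots> = int CARD('n)" using dim_full[OF span_P] by simp
  finally show ?thesis .
qed

lemma cone_mono: "A \<subseteq> B \<Longrightarrow> cone_on A \<subseteq> cone_on B"
  unfolding cone_on_def by blast

lemma exists_other: assumes "CARD('n) \<ge> 2" shows "\<exists>i::'n. i \<noteq> k"
proof (rule ccontr)
  assume "\<not> (\<exists>i::'n. i \<noteq> k)"
  then have eq: "(UNIV::'n set) = {k}" by auto
  have "card (UNIV::'n set) = card {k}" by (rule arg_cong[OF eq])
  then show False using assms by simp
qed



lemma face_from_V:
  assumes "F face_of convex hull (rootsC :: (real^'n) set)"
  obtains W where "W \<subseteq> V" "F = convex hull W"
proof -
  have "F face_of convex hull (V :: (real^'n) set)" using assms by (simp add: P_eq)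
  moreover have "compact (V :: (real^'n) set)" by (rule finite_imp_compact[OF finite_V])
  ultimately show ?thesis using face_of_convex_hull_subset that by blast
qed

lemma U1:
  assumes F: "F face_of convex hull (rootsC :: (real^'n) set)"
    and ad: "aff_dim F = int CARD('n) - 2"
  shows "\<exists>k. span F \<subseteq> {x. x$k = 0}"
proof -
  obtain W where W: "W \<subseteq> V" "F = convex hull W" using face_from_V[OF F] by blast
  show ?thesis
  proof (cases "\<forall>i. \<exists>w\<in>W. w$i \<noteq> 0")
    case True
    have "axis i 1 \<in> span W" for i
    proof -
      obtain w where w: "w \<in> W" "w$i \<noteq> 0" using True by blast
      obtain j c where jc: "c = 2 \<or> c = -2" "w = c *\<^sub>R axis j 1" using V_elem w(1) W(1) by blast
      have "i = j" using axis_nz_idx w(2) jc(2) by blast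
      have "c *\<^sub>R axis j 1 \<in> span W" using w(1) jc(2) by (simp add: span_base)
      then show ?thesis using \<open>i = j\<close> jc(1) axis_from_scaled by fastforce
    qed
    then have "span W = UNIV" by (rule span_all_axes)
    moreover have "span W \<subseteq> span F" unfolding W(2) by (intro span_mono hull_subset)
    ultimately have "span F = UNIV" by blast
    then have dF: "dim F = CARD('n)" by (rule dim_full)
    have "F \<noteq> {}" using \<open>span F = UNIV\<close> by auto
    then obtain a where "a \<in> F" by blast
    from dim_le_aff_dim[OF this] dF ad show ?thesis by simp
  next
    case False
    then obtain k where k: "\<And>w. w \<in> W \<Longrightarrow> w$k = 0" by blast
    have "span W \<subseteq> {x. x$k = 0}" by (intro span_minimal subspace_coord) (auto simp: k)
    then have "F \<subseteq> {x. x$k = 0}" unfolding W(2) using convex_hull_subset_span by blast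
    then have "span F \<subseteq> {x. x$k = 0}" by (intro span_minimal subspace_coord)
    then show ?thesis by blast
  qed
qed


lemma U2:
  assumes n2: "CARD('n) \<ge> 2"
  shows "\<exists>F. F face_of convex hull (rootsC :: (real^'n) set) \<and> aff_dim F = int CARD('n) - 2
            \<and> {x. x$k = 0} \<subseteq> span F"
proof -
  define c :: "real^'n" where "c = (\<chi> i. if i = k then 0 else 1)"
  define F where "F = convex hull (rootsC :: (real^'n) set) \<inter> {x. c \<bullet> x = 2}"
  have cabs: "\<bar>c$i\<bar> \<le> 1" for i by (simp add: c_def)
  have face: "F face_of convex hull (rootsC :: (real^'n) set)"
    unfolding F_def by (intro face_of_Int_supporting_hyperplane_le convex_convex_hull key(1) cabs)
  have inF: "2 *\<^sub>R axis i 1 \<in> F" if "i \<noteq> k" for i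
  proof -
    have "c \<bullet> (2 *\<^sub>R axis i 1) = 2" using that by (simp add: inner_axis c_def)
    then show ?thesis unfolding F_def using pos_in_P by blast
  qed
  have Fsub: "F \<subseteq> {x. x$k = 0}"
  proof
    fix x assume "x \<in> F"
    then have "x \<in> convex hull rootsC" "c \<bullet> x = 2" unfolding F_def by auto
    from key(2)[OF this(1) cabs this(2), of k] show "x \<in> {x. x$k = 0}" by (simp add: c_def)
  qed
  have Hsub: "{x. x$k = 0} \<subseteq> span F"
  proof
    fix x :: "real^'n" assume x: "x \<in> {x. x$k = 0}"
    have "(\<Sum>i\<in>UNIV. x$i *\<^sub>R axis i 1) \<in> span F"
    proof (intro span_sum)
      fix i :: 'n
      show "x$i *\<^sub>R axis i 1 \<in> span F"
      proof (cases "i = k")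
        case True then show ?thesis using x by (simp add: span_0)
      next
        case False
        then have "axis i 1 \<in> span F" using axis_from_scaled[of 2 i F] inF[OF False] by (simp add: span_base)
        then show ?thesis by (rule span_mul)
      qed
    qed
    then show "x \<in> span F" using expand[of x] by simp
  qed
  have spF: "span F = {x. x$k = 0}"
  proof
    show "span F \<subseteq> {x. x$k = 0}" by (intro span_minimal subspace_coord Fsub)
  qed (rule Hsub)
  have dF: "dim F = CARD('n) - 1" by (metis spF dim_span dim_coord_hyp_eq)
  obtain j :: 'n where "j \<noteq> k" using exists_other[OF n2] by blast
  then have aF: "2 *\<^sub>R axis j 1 \<in> F" by (rule inF)
  have "affine hull F \<subseteq> {x. c \<bullet> x = 2}"
    by (intro hull_minimal affine_hyperplane) (auto simp: F_def)
  then have "0 \<notin> affine hull F" by auto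
  from dim_eq_aff_dim[OF aF this] dF n2 have "aff_dim F = int CARD('n) - 2" by simp
  then show ?thesis using face Hsub by blast
qed


lemma Ws_sub:
  assumes "s \<in> Sig"
  shows "Ws s \<subseteq> convex hull (rootsC :: (real^'n) set) \<inter> {x. s \<bullet> x = 2}"
proof
  fix w assume "w \<in> Ws s"
  then obtain i where w: "w = (2 * s$i) *\<^sub>R axis i 1" unfolding Ws_def by blast
  have si: "s$i = 1 \<or> s$i = -1" using assms unfolding Sig_def by blast
  have "w \<in> convex hull rootsC" using si pos_in_P[of i] neg_in_P[of i] w by auto
  moreover have "s \<bullet> w = 2" using Sig_sq[OF assms, of i] w by (simp add: inner_axis)
  ultimately show "w \<in> convex hull (rootsC :: (real^'n) set) \<inter> {x. s \<bullet> x = 2}" by blast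
qed

lemma span_Ws: fixes s :: "real^'n" assumes "s \<in> Sig" shows "span (Ws s) = UNIV"
proof (rule span_all_axes)
  fix i :: 'n
  have "s$i = 1 \<or> s$i = -1" using assms unfolding Sig_def by blast
  then have "2 * s$i \<noteq> 0" by auto
  moreover have "(2 * s$i) *\<^sub>R axis i 1 \<in> span (Ws s)" by (rule span_base) (auto simp: Ws_def)
  ultimately show "axis i 1 \<in> span (Ws s)" using axis_from_scaled by fastforce
qed

lemma F2:
  fixes s :: "real^'n"
  assumes "s \<in> Sig"
  shows "\<exists>F. F facet_of convex hull (rootsC :: (real^'n) set) \<and> cone_on F = Orth s"
proof -
  define F where "F = convex hull (rootsC :: (real^'n) set) \<inter> {x. s \<bullet> x = 2}"
  have sabs: "\<bar>s$i\<bar> \<le> 1" for i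
  proof -
    have "s$i = 1 \<or> s$i = -1" using assms(1) unfolding Sig_def by blast
    then show ?thesis by auto
  qed
  have face: "F face_of convex hull (rootsC :: (real^'n) set)"
    unfolding F_def by (intro face_of_Int_supporting_hyperplane_le convex_convex_hull key(1) sabs)
  have WF: "Ws s \<subseteq> F" unfolding F_def by (rule Ws_sub[OF assms])
  have "span F = UNIV" using span_mono[OF WF] span_Ws[OF assms] by blast
  then have dF: "dim F = CARD('n)" by (rule dim_full)
  have aF: "(2 * s$undefined) *\<^sub>R axis undefined 1 \<in> F" using WF by (auto simp: Ws_def)
  have "affine hull F \<subseteq> {x. s \<bullet> x = 2}"
    by (intro hull_minimal affine_hyperplane) (auto simp: F_def)
  then have "0 \<notin> affine hull F" by auto
  from dim_eq_aff_dim[OF aF this] dF have adF: "aff_dim F = int CARD('n) - 1" by simp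
  have facet: "F facet_of convex hull (rootsC :: (real^'n) set)"
    unfolding facet_of_def using face aF adF aff_dim_P[where 'n='n] by auto
  have "cone_on F \<subseteq> Orth s" by (rule cone_sub_Orth[OF assms]) (simp add: F_def)
  moreover have "Orth s \<subseteq> cone_on F"
  proof -
    have "convex hull Ws s \<subseteq> F"
      by (intro hull_minimal WF) (simp add: F_def convex_Int convex_hyperplane)
    then show ?thesis using Orth_sub_cone[OF assms] cone_mono by blast
  qed
  ultimately show ?thesis using facet by blast
qed


lemma F1:
  assumes facet: "F facet_of convex hull (rootsC :: (real^'n) set)"
  shows "\<exists>s\<in>Sig. cone_on F = Orth s"
proof -
  have face: "F face_of convex hull (rootsC :: (real^'n) set)" and ne: "F \<noteq> {}"
    and adF: "aff_dim F = int CARD('n) - 1"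
    using facet aff_dim_P[where 'n='n] unfolding facet_of_def by auto
  obtain W where W: "W \<subseteq> V" "F = convex hull W" using face_from_V[OF face] by blast
  have noanti: "\<not> (2 *\<^sub>R axis i 1 \<in> W \<and> - (2 *\<^sub>R axis i 1) \<in> W)" for i
  proof
    assume h: "2 *\<^sub>R axis i 1 \<in> W \<and> - (2 *\<^sub>R axis i 1) \<in> W"
    have "(1/2) *\<^sub>R (2 *\<^sub>R axis i 1) + (1/2) *\<^sub>R (- (2 *\<^sub>R axis i 1)) \<in> F"
      unfolding W(2) by (rule convexD[OF convex_convex_hull hull_inc hull_inc]) (use h in auto)
    then have z: "(0::real^'n) \<in> F" by simp
    have VF: "V \<subseteq> F"
    proof
      fix v :: "real^'n" assume "v \<in> V"
      then obtain j :: 'n where "v = 2 *\<^sub>R axis j 1 \<or> v = - (2 *\<^sub>R axis j 1)" unfolding V_def by blast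
      moreover
      have "(0::real^'n) \<in> open_segment (- (2 *\<^sub>R axis j 1)) (2 *\<^sub>R axis j 1)"
        unfolding in_segment
      proof
        show "- (2 *\<^sub>R axis j 1) \<noteq> (2 *\<^sub>R axis j 1 :: real^'n)"
        proof
          assume "- (2 *\<^sub>R axis j 1) = (2 *\<^sub>R axis j 1 :: real^'n)"
          then have "(- (2 *\<^sub>R axis j 1) :: real^'n) $ j = (2 *\<^sub>R axis j 1 :: real^'n) $ j" by simp
          then show False by simp
        qed
        show "\<exists>u>0. u < 1 \<and> (0::real^'n) = (1 - u) *\<^sub>R - (2 *\<^sub>R axis j 1) + u *\<^sub>R 2 *\<^sub>R axis j 1"
          by (rule exI[of _ "1/2"]) simp
      qed
      then have "- (2 *\<^sub>R axis j 1) \<in> F \<and> 2 *\<^sub>R axis j 1 \<in> F"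
        by (rule face_ofD[OF face _ neg_in_P pos_in_P z])
      ultimately show "v \<in> F" by blast
    qed
    have "convex hull rootsC \<subseteq> F"
      unfolding P_eq by (intro hull_minimal VF face_of_imp_convex[OF face])
    then have "aff_dim (convex hull (rootsC :: (real^'n) set)) \<le> aff_dim F" by (rule aff_dim_subset)
    then show False using adF aff_dim_P[where 'n='n] by simp
  qed
  define s :: "real^'n" where "s = (\<chi> i. if - (2 *\<^sub>R axis i 1) \<in> W then -1 else 1)"
  have sS: "s \<in> Sig" unfolding Sig_def s_def by simp
  have WWs: "W \<subseteq> Ws s"
  proof
    fix w assume w: "w \<in> W"
    then obtain i c where ic: "c = 2 \<or> c = -2" "w = c *\<^sub>R axis i 1" using V_elem W(1) by blast
    show "w \<in> Ws s"
    proof (cases "c = 2")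
      case True
      then have "- (2 *\<^sub>R axis i 1) \<notin> W" using noanti[of i] w ic by auto
      then have "s$i = 1" by (simp add: s_def)
      then have "w = (2 * s$i) *\<^sub>R axis i 1" using ic True by simp
      then show ?thesis unfolding Ws_def by blast
    next
      case False
      then have "c = -2" using ic by auto
      then have "- (2 *\<^sub>R axis i 1) \<in> W" using w ic by simp
      then have "s$i = -1" by (simp add: s_def)
      then have "w = (2 * s$i) *\<^sub>R axis i 1" using ic \<open>c = -2\<close> by simp
      then show ?thesis unfolding Ws_def by blast
    qed
  qed
  have FH: "F \<subseteq> convex hull (rootsC :: (real^'n) set) \<inter> {x. s \<bullet> x = 2}"
    unfolding W(2) using Ws_sub[OF sS] WWs
    by (intro hull_minimal) (auto simp: convex_Int convex_hyperplane)
  have c1: "cone_on F \<subseteq> Orth s" by (rule cone_sub_Orth[OF sS FH])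
  obtain a where aF: "a \<in> F" using ne by blast
  have "affine hull F \<subseteq> {x. s \<bullet> x = 2}"
    using FH by (intro hull_minimal affine_hyperplane) auto
  then have "0 \<notin> affine hull F" by auto
  from dim_eq_aff_dim[OF aF this] adF have dF: "dim F = CARD('n)" by simp
  have allk: "\<exists>w\<in>W. w$k \<noteq> 0" for k
  proof (rule ccontr)
    assume "\<not> (\<exists>w\<in>W. w$k \<noteq> 0)"
    then have "W \<subseteq> {x. x$k = 0}" by auto
    then have "span W \<subseteq> {x. x$k = 0}" by (intro span_minimal subspace_coord)
    then have "F \<subseteq> {x. x$k = 0}" unfolding W(2) using convex_hull_subset_span by blast
    then have "dim F \<le> CARD('n) - 1" by (rule dim_coord_hyp)
    moreover have "0 < CARD('n)" by (simp add: card_gt_0_iff)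
    ultimately show False using dF by linarith
  qed
  have WsW: "Ws s \<subseteq> W"
  proof
    fix v assume "v \<in> Ws s"
    then obtain k where v: "v = (2 * s$k) *\<^sub>R axis k 1" unfolding Ws_def by blast
    obtain w where w: "w \<in> W" "w$k \<noteq> 0" using allk by blast
    then obtain j where j: "w = (2 * s$j) *\<^sub>R axis j 1" using WWs unfolding Ws_def by blast
    then have "k = j" using axis_nz_idx w(2) by blast
    then show "v \<in> W" using v j w(1) by simp
  qed
  have "Orth s \<subseteq> cone_on F"
    using Orth_sub_cone[OF sS] cone_mono[OF hull_mono[OF WsW]] W(2) by blast
  with c1 show ?thesis using sS by blast
qed


theorem theorem4p7:
  assumes "CARD('n) \<ge> 2"
  shows "closure ` arrangement_regions (span (rootsC :: (real ^ 'n) set))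
                     (root_arrangement (rootsC :: (real ^ 'n) set))
         = {cone_on F | F. F facet_of root_polytope (rootsC :: (real ^ 'n) set)}"
proof -
  have dimE: "dim (span (rootsC :: (real^'n) set)) = CARD('n)"
    by (rule dim_full) (simp add: span_roots)
  have U: "\<Union> (root_arrangement (rootsC :: (real^'n) set)) = {x. \<exists>k. x$k = 0}"
  proof
    show "\<Union> (root_arrangement (rootsC :: (real^'n) set)) \<subseteq> {x. \<exists>k. x$k = 0}"
    proof
      fix x assume "x \<in> \<Union> (root_arrangement (rootsC :: (real^'n) set))"
      then obtain F where F: "F face_of convex hull (rootsC :: (real^'n) set)"
        "aff_dim F = int CARD('n) - 2" "x \<in> span F"
        unfolding root_arrangement_def root_polytope_def dimE by blast
      obtain k where "span F \<subseteq> {x. x$k = 0}" using U1[OF F(1,2)] by blast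
      then show "x \<in> {x. \<exists>k. x$k = 0}" using F(3) by blast
    qed
    show "{x. \<exists>k. x$k = 0} \<subseteq> \<Union> (root_arrangement (rootsC :: (real^'n) set))"
    proof
      fix x :: "real^'n" assume "x \<in> {x. \<exists>k. x$k = 0}"
      then obtain k where k: "x$k = 0" by blast
      obtain F where F: "F face_of convex hull (rootsC :: (real^'n) set)"
        "aff_dim F = int CARD('n) - 2" "{x. x$k = 0} \<subseteq> span F"
        using U2[OF assms, of k] by blast
      have "span F \<in> root_arrangement (rootsC :: (real^'n) set)"
        unfolding root_arrangement_def root_polytope_def dimE using F(1,2) by blast
      moreover have "x \<in> span F" using F(3) k by blast
      ultimately show "x \<in> \<Union> (root_arrangement (rootsC :: (real^'n) set))" by blast
    qed
  qed
  have L: "closure ` arrangement_regions (span (rootsC :: (real ^ 'n) set))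
                     (root_arrangement (rootsC :: (real ^ 'n) set)) = Orth ` Sig"
  proof -
    have "closure ` arrangement_regions (span (rootsC :: (real ^ 'n) set))
                     (root_arrangement (rootsC :: (real ^ 'n) set)) = closure ` (Qo ` Sig)"
      unfolding arrangement_regions_def span_roots U components_orth by (rule refl)
    also have "\<dots> = Orth ` Sig" unfolding image_image by (rule image_cong[OF refl closure_Qo])
    finally show ?thesis .
  qed
  have R: "{cone_on F | F. F facet_of root_polytope (rootsC :: (real ^ 'n) set)} = Orth ` Sig"
  proof
    show "{cone_on F | F. F facet_of root_polytope (rootsC :: (real ^ 'n) set)} \<subseteq> Orth ` Sig"
      unfolding root_polytope_def using F1 by blast
    show "Orth ` Sig \<subseteq> {cone_on F | F. F facet_of root_polytope (rootsC :: (real ^ 'n) set)}"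
    proof
      fix X assume "X \<in> Orth ` (Sig :: (real^'n) set)"
      then obtain s :: "real^'n" where s: "s \<in> Sig" "X = Orth s" by blast
      obtain F where "F facet_of convex hull (rootsC :: (real^'n) set)" "cone_on F = Orth s"
        using F2[OF s(1)] by blast
      then show "X \<in> {cone_on F | F. F facet_of root_polytope (rootsC :: (real ^ 'n) set)}"
        unfolding root_polytope_def using s(2) by blast
    qed
  qed
  show ?thesis using L R by simp
qed


end
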